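(* For all integers $r\ge 2$ and $n\ge r$, $$\mathrm{exa}_1(n,K_r)=\binom{r}{2}+(r-2)(n-r)+\mathrm{ex}(n-r,K_r).$$
   Context: For a graph $H$ and a graph $F$, $\mathcal N(H,F)$ denotes the number of subgraphs of $H$ isomorphic to $F$. For a nonnegative integer $k$, $\mathrm{exa}_k(n,F)$ is the largest number of edges of a simple graph $H$ on $n$ vertices with $\mathcal N(H,F)=k$. $\mathrm{ex}(m,F)$ is the Turán number: the largest number of edges of a simple graph on $m$ vertices containing no subgraph isomorphic to $F$ (with $\mathrm{ex}(0,F)=0$). $K_r$ is the complete graph on $r$ vertices. *)

theory Defs
  imports Main
begin

definition simple_graph :: "'a set \<Rightarrow> 'a set set \<Rightarrow> bool" where
  "simple_graph V E \<longleftrightarrow> finite V \<and> (\<forall>e\<in>E. card e = 2 \<and> e \<subseteq> V)"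

definition num_sub :: "'a set \<Rightarrow> 'a set set \<Rightarrow> 'b set \<Rightarrow> 'b set set \<Rightarrow> nat" where
  "num_sub V E VF EF = card {(V', E'). V' \<subseteq> V \<and> E' \<subseteq> E \<and>
       (\<exists>f. bij_betw f VF V' \<and> (\<lambda>e. f ` e) ` EF = E')}"

definition K_verts :: "nat \<Rightarrow> nat set" where
  "K_verts r = {0..<r}"

definition K_edges :: "nat \<Rightarrow> nat set set" where
  "K_edges r = {e. e \<subseteq> {0..<r} \<and> card e = 2}"

definition exa :: "nat \<Rightarrow> nat \<Rightarrow> 'b set \<Rightarrow> 'b set set \<Rightarrow> nat" where
  "exa k n VF EF = Max {card E | E. simple_graph {0..<n} E \<and> num_sub {0..<n} E VF EF = k}"

definition ex :: "nat \<Rightarrow> 'b set \<Rightarrow> 'b set set \<Rightarrow> nat" where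
  "ex m VF EF = Max {card E | E. simple_graph {0..<m} E \<and> num_sub {0..<m} E VF EF = 0}"

end

theory Submission
  imports Defs
begin


definition clique :: "'a set set \<Rightarrow> 'a set \<Rightarrow> bool" where
  "clique E C \<longleftrightarrow> (\<forall>x\<in>C. \<forall>y\<in>C. x \<noteq> y \<longrightarrow> {x,y} \<in> E)"

definition cl :: "'a set \<Rightarrow> 'a set set \<Rightarrow> nat \<Rightarrow> 'a set set" where
  "cl V E r = {C. C \<subseteq> V \<and> card C = r \<and> clique E C}"

definition P2 :: "'a set \<Rightarrow> 'a set set" where
  "P2 A = {e. e \<subseteq> A \<and> card e = 2}"

lemma clique_P2: "clique E C \<longleftrightarrow> P2 C \<subseteq> E"
proof
  assume "clique E C" thus "P2 C \<subseteq> E" unfolding clique_def P2_def by (auto simp: card_2_iff)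
next
  assume a: "P2 C \<subseteq> E"
  show "clique E C" unfolding clique_def
  proof (intro ballI impI)
    fix x y assume "x \<in> C" "y \<in> C" "x \<noteq> y"
    hence "{x,y} \<in> P2 C" unfolding P2_def by auto
    thus "{x,y} \<in> E" using a by blast
  qed
qed

lemma clique_subset: "clique E C \<Longrightarrow> D \<subseteq> C \<Longrightarrow> clique E D"
  unfolding clique_def by blast

lemma bij_P2:
  assumes b: "bij_betw f {0..<r} V'"
  shows "(\<lambda>e. f ` e) ` K_edges r = P2 V'"
proof -
  have inj: "inj_on f {0..<r}" and im: "f ` {0..<r} = V'" using b by (auto simp: bij_betw_def)
  show ?thesis
  proof
    show "(\<lambda>e. f ` e) ` K_edges r \<subseteq> P2 V'"
    proof
      fix e' assume "e' \<in> (\<lambda>e. f ` e) ` K_edges r"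
      then obtain e where e: "e \<subseteq> {0..<r}" "card e = 2" "e' = f ` e" by (auto simp: K_edges_def)
      have ie: "inj_on f e" using inj e(1) by (rule inj_on_subset)
      have "card (f ` e) = card e" using ie by (rule card_image)
      hence c: "card e' = 2" using e(2,3) by simp
      have "f ` e \<subseteq> f ` {0..<r}" using e(1) by (rule image_mono)
      hence "e' \<subseteq> V'" using e(3) im by simp
      thus "e' \<in> P2 V'" using c by (simp add: P2_def)
    qed
  next
    show "P2 V' \<subseteq> (\<lambda>e. f ` e) ` K_edges r"
    proof
      fix e' assume "e' \<in> P2 V'"
      hence e': "e' \<subseteq> V'" "card e' = 2" by (auto simp: P2_def)
      define e where "e = {a \<in> {0..<r}. f a \<in> e'}"
      have fe: "f ` e = e'"
      proof
        show "f ` e \<subseteq> e'" unfolding e_def by blast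
        show "e' \<subseteq> f ` e"
        proof
          fix y assume "y \<in> e'"
          hence "y \<in> f ` {0..<r}" using e'(1) im by blast
          then obtain a where "a \<in> {0..<r}" "y = f a" by blast
          thus "y \<in> f ` e" using \<open>y \<in> e'\<close> unfolding e_def by blast
        qed
      qed
      have es: "e \<subseteq> {0..<r}" unfolding e_def by blast
      have "inj_on f e" using inj es by (rule inj_on_subset)
      hence "card (f ` e) = card e" by (rule card_image)
      hence "card e = 2" using fe e'(2) by simp
      hence "e \<in> K_edges r" using es unfolding K_edges_def by blast
      thus "e' \<in> (\<lambda>e. f ` e) ` K_edges r" using fe by blast
    qed
  qed
qed

lemma num_sub_K:
  assumes "finite V"
  shows "num_sub V E (K_verts r) (K_edges r) = card (cl V E r)"
proof -
  have "{(V', E'). V' \<subseteq> V \<and> E' \<subseteq> E \<and> (\<exists>f. bij_betw f (K_verts r) V' \<and> (\<lambda>e. f ` e) ` K_edges r = E')}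
        = (\<lambda>C. (C, P2 C)) ` cl V E r" (is "?L = ?R")
  proof
    show "?L \<subseteq> ?R"
    proof
      fix p assume "p \<in> ?L"
      obtain V' E' where pp: "p = (V', E')" by (cases p)
      with \<open>p \<in> ?L\<close> have "V' \<subseteq> V" "E' \<subseteq> E" "\<exists>f. bij_betw f {0..<r} V' \<and> (\<lambda>e. f ` e) ` K_edges r = E'"
        by (simp_all add: K_verts_def)
      then obtain f where p: "p = (V', E')" "V' \<subseteq> V" "E' \<subseteq> E" "bij_betw f {0..<r} V'"
          "(\<lambda>e. f ` e) ` K_edges r = E'" using pp by blast
      have "E' = P2 V'" using bij_P2[OF p(4)] p(5) by metis
      moreover have "card V' = r" using bij_betw_same_card[OF p(4)] by simp
      moreover have "clique E V'" unfolding clique_P2 using p(3) \<open>E' = P2 V'\<close> by simp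
      ultimately have "V' \<in> cl V E r" using p unfolding cl_def by auto
      thus "p \<in> ?R" using p \<open>E' = P2 V'\<close> by blast
    qed
  next
    show "?R \<subseteq> ?L"
    proof
      fix p assume "p \<in> ?R"
      then obtain C where C: "p = (C, P2 C)" "C \<subseteq> V" "card C = r" "clique E C" by (auto simp: cl_def)
      have "finite C" using C(2) assms finite_subset by blast
      then obtain f where f: "bij_betw f {0..<r} C" using C(3) ex_bij_betw_nat_finite by blast
      have "(\<lambda>e. f ` e) ` K_edges r = P2 C" by (rule bij_P2[OF f])
      hence "\<exists>f. bij_betw f (K_verts r) C \<and> (\<lambda>e. f ` e) ` K_edges r = P2 C"
        using f unfolding K_verts_def by blast
      then show "p \<in> ?L" using C clique_P2 by auto
    qed
  qed
  moreover have "inj_on (\<lambda>C. (C, P2 C)) (cl V E r)" by (auto simp: inj_on_def)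
  ultimately show ?thesis unfolding num_sub_def by (simp add: card_image)
qed

lemma card_pairs:
  assumes "\<forall>x\<in>A. B x \<inter> A = {}"
  shows "card ((\<lambda>(x,y). {x,y}) ` Sigma A B) = card (Sigma A B)"
proof -
  have "inj_on (\<lambda>(x,y). {x,y}) (Sigma A B)"
    unfolding inj_on_def using assms by (auto simp: doubleton_eq_iff)
  thus ?thesis by (simp add: card_image)
qed

lemma fin_cards: "finite {card E | E. simple_graph {0..<m::nat} E \<and> P E}"
proof (rule finite_subset)
  show "{card E | E. simple_graph {0..<m} E \<and> P E} \<subseteq> card ` Pow (Pow {0..<m})"
    by (auto simp: simple_graph_def)
  show "finite (card ` Pow (Pow {0..<m::nat}))" by simp
qed

lemma two_elems: "2 \<le> card C \<Longrightarrow> \<exists>x\<in>C. \<exists>y\<in>C. x \<noteq> y"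
  by (metis One_nat_def card.infinite card_le_Suc0_iff_eq not_less_eq_eq numeral_2_eq_2 zero_le)



definition CM :: "'a set \<Rightarrow> ('a \<Rightarrow> nat) \<Rightarrow> 'a set set" where
  "CM V col = {{x,y} | x y. x \<in> V \<and> y \<in> V \<and> col x \<noteq> col y}"

lemma CM_sub: "CM V col \<subseteq> Pow V"
  unfolding CM_def by auto

lemma CM_finite: "finite V \<Longrightarrow> finite (CM V col)"
  using CM_sub finite_subset by (metis finite_Pow_iff)

lemma turan_col:
  assumes "finite V" "\<forall>e\<in>E. card e = 2 \<and> e \<subseteq> V" "\<forall>C. C \<subseteq> V \<and> clique E C \<longrightarrow> card C < r"
  shows "\<exists>col. (\<forall>x\<in>V. col x < r - 1) \<and> card E \<le> card (CM V col)"
  using assms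
proof (induction r arbitrary: V E)
  case 0
  have "clique E {}" unfolding clique_def by simp
  with "0.prems"(3) show ?case by auto
next
  case (Suc r)
  have "E \<subseteq> Pow V" using Suc.prems(2) by blast
  hence finE: "finite E" using Suc.prems(1) finite_subset by (simp add: finite_subset)
  show ?case
  proof (cases "E = {}")
    case True
    then show ?thesis
    proof (cases "r = 0")
      case True
      have "V = {}"
      proof (rule ccontr)
        assume "V \<noteq> {}"
        then obtain x where "x \<in> V" by blast
        have "clique E {x}" unfolding clique_def by simp
        with Suc.prems(3) \<open>x \<in> V\<close> True show False by auto
      qed
      thus ?thesis using \<open>E = {}\<close> by simp
    next
      case False
      thus ?thesis using \<open>E = {}\<close> by (intro exI[of _ "\<lambda>_. 0"]) simp
    qed
  next
    case False
    then obtain e0 where "e0 \<in> E" by blast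
    have "card e0 = 2" "e0 \<subseteq> V" using Suc.prems(2) \<open>e0 \<in> E\<close> by blast+
    hence "e0 \<noteq> {}" by auto
    hence "V \<noteq> {}" using \<open>e0 \<subseteq> V\<close> by blast
    define N where "N u = {w \<in> V. {u,w} \<in> E}" for u
    have finN: "finite (N u)" for u using Suc.prems(1) unfolding N_def by simp
    define D where "D = Max ((\<lambda>u. card (N u)) ` V)"
    have "D \<in> (\<lambda>u. card (N u)) ` V" unfolding D_def using Suc.prems(1) \<open>V \<noteq> {}\<close> by (intro Max_in) auto
    then obtain v where v: "v \<in> V" "card (N v) = D" by blast
    have vmax: "card (N u) \<le> card (N v)" if "u \<in> V" for u
      unfolding v(2) D_def using Suc.prems(1) that by (intro Max_ge) auto
    define Nv where "Nv = N v"
    define EN where "EN = {e\<in>E. e \<subseteq> Nv}"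
    have NvV: "Nv \<subseteq> V" unfolding Nv_def N_def by auto
    have vNv: "v \<notin> Nv"
    proof
      assume "v \<in> Nv"
      hence "{v} \<in> E" unfolding Nv_def N_def by simp
      hence "card {v} = 2" using Suc.prems(2) by blast
      thus False by simp
    qed
    have cl': "\<forall>C. C \<subseteq> Nv \<and> clique EN C \<longrightarrow> card C < r"
    proof (intro allI impI)
      fix C assume C: "C \<subseteq> Nv \<and> clique EN C"
      have "clique E (insert v C)" unfolding clique_def
      proof (intro ballI impI)
        fix x y assume xy: "x \<in> insert v C" "y \<in> insert v C" "x \<noteq> y"
        show "{x,y} \<in> E"
        proof (cases "x = v")
          case True
          hence "y \<in> Nv" using xy C by auto
          thus ?thesis using True unfolding Nv_def N_def by simp
        next
          case xv: False
          show ?thesis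
          proof (cases "y = v")
            case True
            hence "x \<in> Nv" using xy xv C by auto
            thus ?thesis using True unfolding Nv_def N_def by (simp add: insert_commute)
          next
            case False
            hence "x \<in> C" "y \<in> C" using xy xv by auto
            thus ?thesis using C xy(3) unfolding clique_def EN_def by blast
          qed
        qed
      qed
      moreover have "insert v C \<subseteq> V" using C NvV v(1) by auto
      ultimately have "insert v C \<subseteq> V \<and> clique E (insert v C)" by (rule conjI[rotated])
      hence "card (insert v C) < Suc r" by (rule Suc.prems(3)[rule_format])
      moreover have "C \<subseteq> V" using C NvV by (meson order_trans)
      hence "finite C" using Suc.prems(1) by (rule finite_subset)
      moreover have "v \<notin> C" using C vNv by blast
      ultimately show "card C < r" by simp
    qed
    have ENs: "\<forall>e\<in>EN. card e = 2 \<and> e \<subseteq> Nv" unfolding EN_def using Suc.prems(2) by blast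
    have "finite Nv" using finN unfolding Nv_def by simp
    obtain col' where col': "\<forall>x\<in>Nv. col' x < r - 1" "card EN \<le> card (CM Nv col')"
      using Suc.IH[OF \<open>finite Nv\<close> ENs cl'] by blast
    define col where "col x = (if x \<in> Nv then col' x else r - 1)" for x
    have r0: "r \<noteq> 0"
    proof
      assume "r = 0"
      obtain a b where "e0 = {a,b}" "a \<noteq> b" using \<open>card e0 = 2\<close> unfolding card_2_iff by blast
      hence "clique E {a,b}" unfolding clique_def using \<open>e0 \<in> E\<close> by (auto simp: insert_commute)
      moreover have "{a,b} \<subseteq> V" using \<open>e0 \<in> E\<close> \<open>e0 = {a,b}\<close> Suc.prems(2) by blast
      ultimately have "{a,b} \<subseteq> V \<and> clique E {a,b}" by (rule conjI[rotated])
      hence "card {a,b} < Suc r" by (rule Suc.prems(3)[rule_format])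
      thus False using \<open>r = 0\<close> \<open>a \<noteq> b\<close> by simp
    qed
    have colb: "\<forall>x\<in>V. col x < Suc r - 1" unfolding col_def using col'(1) r0 by auto
    define U where "U = (\<Union>y\<in>V - Nv. {e\<in>E. y \<in> e})"
    have EU: "E \<subseteq> EN \<union> U"
    proof
      fix e assume e: "e \<in> E"
      show "e \<in> EN \<union> U"
      proof (cases "e \<subseteq> Nv")
        case True thus ?thesis using e unfolding EN_def by blast
      next
        case False
        then obtain y where "y \<in> e" "y \<notin> Nv" by blast
        moreover have "y \<in> V" using e Suc.prems(2) \<open>y \<in> e\<close> by blast
        ultimately show ?thesis using e unfolding U_def by blast
      qed
    qed
    have Uy: "card {e\<in>E. y \<in> e} \<le> card Nv" if "y \<in> V" for y
    proof -
      have "{e\<in>E. y \<in> e} \<subseteq> (\<lambda>w. {y,w}) ` N y"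
      proof
        fix e assume e: "e \<in> {e\<in>E. y \<in> e}"
        hence "card e = 2" using Suc.prems(2) by blast
        then obtain a b where ab: "e = {a,b}" "a \<noteq> b" unfolding card_2_iff by blast
        show "e \<in> (\<lambda>w. {y,w}) ` N y"
        proof (cases "a = y")
          case True
          hence "b \<in> N y" using e ab Suc.prems(2) unfolding N_def by auto
          thus ?thesis using ab True by blast
        next
          case False
          hence "b = y" using e ab by auto
          hence "a \<in> N y" using e ab Suc.prems(2) unfolding N_def by (auto simp: insert_commute)
          thus ?thesis using ab \<open>b = y\<close> by (auto simp: insert_commute)
        qed
      qed
      hence "card {e\<in>E. y \<in> e} \<le> card ((\<lambda>w. {y,w}) ` N y)" by (intro card_mono) (auto simp: finN)
      also have "\<dots> \<le> card (N y)" by (rule card_image_le) (simp add: finN)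
      also have "\<dots> \<le> card Nv" unfolding Nv_def using vmax that by blast
      finally show ?thesis .
    qed
    have "card U \<le> (\<Sum>y\<in>V - Nv. card {e\<in>E. y \<in> e})" unfolding U_def
      using Suc.prems(1) by (intro card_UN_le) simp
    also have "\<dots> \<le> (\<Sum>y\<in>V - Nv. card Nv)" using Uy by (intro sum_mono) simp
    also have "\<dots> = card Nv * card (V - Nv)" by simp
    finally have cU: "card U \<le> card Nv * card (V - Nv)" .
    have "card E \<le> card (EN \<union> U)" proof (rule card_mono[OF _ EU])
      have "EN \<union> U \<subseteq> E" unfolding EN_def U_def by blast
      thus "finite (EN \<union> U)" using finE by (rule finite_subset)
    qed
    also have "\<dots> \<le> card EN + card U" by (rule card_Un_le)
    finally have cE: "card E \<le> card (CM Nv col') + card Nv * card (V - Nv)" using col'(2) cU by linarith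
    define X where "X = (\<lambda>(x,y). {x,y}) ` (Nv \<times> (V - Nv))"
    have cX: "card X = card Nv * card (V - Nv)"
      unfolding X_def by (subst card_pairs) (auto simp: card_cartesian_product)
    have sub: "CM Nv col' \<union> X \<subseteq> CM V col"
    proof
      fix e assume "e \<in> CM Nv col' \<union> X"
      then show "e \<in> CM V col"
      proof
        assume "e \<in> CM Nv col'"
        then obtain x y where "e = {x,y}" "x \<in> Nv" "y \<in> Nv" "col' x \<noteq> col' y" unfolding CM_def by blast
        moreover have "col x \<noteq> col y" unfolding col_def using calculation by simp
        moreover have "x \<in> V" "y \<in> V" using NvV calculation by blast+
        ultimately show ?thesis unfolding CM_def by blast
      next
        assume "e \<in> X"
        then obtain x y where "e = {x,y}" "x \<in> Nv" "y \<in> V" "y \<notin> Nv" unfolding X_def by auto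
        moreover have "col' x < r - 1" using col'(1) \<open>x \<in> Nv\<close> by blast
        moreover have "col x \<noteq> col y" unfolding col_def using calculation by auto
        moreover have "x \<in> V" using NvV \<open>x \<in> Nv\<close> by blast
        ultimately show ?thesis unfolding CM_def by blast
      qed
    qed
    have disj: "CM Nv col' \<inter> X = {}"
    proof -
      have "\<And>e. e \<in> X \<Longrightarrow> \<not> e \<subseteq> Nv" unfolding X_def by auto
      thus ?thesis using CM_sub by blast
    qed
    have finX: "finite X" unfolding X_def using Suc.prems(1) finN Nv_def by simp
    have "card (CM Nv col') + card Nv * card (V - Nv) = card (CM Nv col' \<union> X)"
      using card_Un_disjoint[OF CM_finite[OF \<open>finite Nv\<close>] finX disj] cX by simp
    also have "\<dots> \<le> card (CM V col)" using sub CM_finite Suc.prems(1) by (intro card_mono) auto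
    finally show ?thesis using cE colb by (intro exI[of _ col]) simp
  qed
qed



lemma cl_finite: "finite V \<Longrightarrow> finite (cl V E r)"
  by (rule finite_subset[of _ "Pow V"]) (auto simp: cl_def)

lemma ex_ge:
  assumes r2: "r \<ge> 2" and finW: "finite W" and cW: "card W = m"
    and G: "\<forall>e\<in>G. card e = 2 \<and> e \<subseteq> W" and clW: "cl W G r = {}"
  shows "card G \<le> ex m (K_verts r) (K_edges r)"
proof -
  obtain g where g: "bij_betw g W {0..<m}" using ex_bij_betw_finite_nat[OF finW] cW by blast
  have ig: "inj_on g W" and img: "g ` W = {0..<m}" using g by (auto simp: bij_betw_def)
  define G' where "G' = (\<lambda>e. g ` e) ` G"
  have GP: "G \<subseteq> Pow W" using G by blast
  have "inj_on (\<lambda>e. g ` e) G" using inj_on_image_Pow[OF ig] GP by (rule inj_on_subset)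
  hence cG: "card G' = card G" unfolding G'_def by (rule card_image)
  have sG: "simple_graph {0..<m} G'" unfolding simple_graph_def
  proof (intro conjI ballI)
    show "finite {0..<m}" by simp
  next
    fix e' assume "e' \<in> G'"
    then obtain e where e: "e \<in> G" "e' = g ` e" unfolding G'_def by blast
    have "inj_on g e" using ig G e(1) inj_on_subset by blast
    hence "card e' = card e" using e(2) card_image[of g e] by simp
    thus "card e' = 2" using G e(1) by simp
    show "e' \<subseteq> {0..<m}" using e G img by blast
  qed
  have "cl {0..<m} G' r = {}"
  proof (rule ccontr)
    assume "cl {0..<m} G' r \<noteq> {}"
    then obtain C where C: "C \<subseteq> {0..<m}" "card C = r" "clique G' C" unfolding cl_def by blast
    define D where "D = {x \<in> W. g x \<in> C}"
    have DW: "D \<subseteq> W" unfolding D_def by blast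
    have gD: "g ` D = C"
    proof
      show "g ` D \<subseteq> C" unfolding D_def by blast
      show "C \<subseteq> g ` D"
      proof
        fix c assume "c \<in> C"
        hence "c \<in> g ` W" using C(1) img by blast
        then obtain x where "x \<in> W" "c = g x" by blast
        thus "c \<in> g ` D" unfolding D_def using \<open>c \<in> C\<close> by blast
      qed
    qed
    have "inj_on g D" using ig DW by (rule inj_on_subset)
    hence "card D = r" using card_image[of g D] gD C(2) by simp
    moreover have "clique G D" unfolding clique_def
    proof (intro ballI impI)
      fix x y assume xy: "x \<in> D" "y \<in> D" "x \<noteq> y"
      have "g x \<noteq> g y" using ig xy DW unfolding inj_on_def by blast
      moreover have "g x \<in> C" "g y \<in> C" using xy unfolding D_def by auto
      ultimately have "{g x, g y} \<in> G'" using C(3) unfolding clique_def by blast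
      then obtain e where e: "e \<in> G" "g ` e = {g x, g y}" unfolding G'_def by blast
      have "g ` e = g ` {x,y}" using e(2) by simp
      moreover have "e \<subseteq> W" using G e(1) by blast
      moreover have "{x,y} \<subseteq> W" using xy DW by blast
      ultimately have "e = {x,y}" using inj_on_image_eq_iff[OF ig] by blast
      thus "{x,y} \<in> G" using e(1) by simp
    qed
    ultimately have "D \<in> cl W G r" using DW unfolding cl_def by blast
    thus False using clW by blast
  qed
  hence "num_sub {0..<m} G' (K_verts r) (K_edges r) = 0" by (simp add: num_sub_K)
  hence "card G' \<in> {card E | E. simple_graph {0..<m} E \<and> num_sub {0..<m} E (K_verts r) (K_edges r) = 0}"
    using sG by blast
  hence "card G' \<le> ex m (K_verts r) (K_edges r)" unfolding ex_def using fin_cards by (rule Max_ge[rotated])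
  thus ?thesis using cG by simp
qed



lemma upper:
  assumes r2: "r \<ge> 2" and rn: "r \<le> n" and sg: "simple_graph {0..<n} E"
    and one: "card (cl {0..<n} E r) = 1"
  shows "card E \<le> (r choose 2) + (r - 2) * (n - r) + ex (n - r) (K_verts r) (K_edges r)"
proof -
  define V where "V = {0..<n::nat}"
  have Es: "\<forall>e\<in>E. card e = 2 \<and> e \<subseteq> V" using sg unfolding simple_graph_def V_def by blast
  obtain S where clS: "cl V E r = {S}" using one unfolding V_def by (auto simp: card_1_singleton_iff)
  have S: "S \<subseteq> V" "card S = r" "clique E S" using clS unfolding cl_def by blast+
  have finV: "finite V" unfolding V_def by simp
  have finS: "finite S" using S(1) finV by (rule finite_subset)
  define W where "W = V - S"
  have cW: "card W = n - r" unfolding W_def using card_Diff_subset[OF finS S(1)] S(2) V_def by simp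
  define ES where "ES = {e\<in>E. e \<subseteq> S}"
  define EW where "EW = {e\<in>E. e \<subseteq> W}"
  define U where "U = (\<Union>x\<in>W. {e\<in>E. x \<in> e \<and> e \<inter> S \<noteq> {}})"
  have "E \<subseteq> Pow V" using Es by blast
  hence finE: "finite E" using finV by (simp add: finite_subset)
  have EU: "E \<subseteq> ES \<union> EW \<union> U"
  proof
    fix e assume e: "e \<in> E"
    show "e \<in> ES \<union> EW \<union> U"
    proof (cases "e \<subseteq> S \<or> e \<subseteq> W")
      case True thus ?thesis using e unfolding ES_def EW_def by blast
    next
      case False
      then obtain a b where ab: "a \<in> e" "a \<notin> S" "b \<in> e" "b \<notin> W" by blast
      moreover have "e \<subseteq> V" using Es e by blast
      ultimately have "a \<in> W" "b \<in> S" unfolding W_def by blast+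
      thus ?thesis using e ab unfolding U_def by blast
    qed
  qed
  have cES: "card ES \<le> r choose 2"
  proof -
    have "ES \<subseteq> {B. B \<subseteq> S \<and> card B = 2}" unfolding ES_def using Es by blast
    moreover have "finite {B. B \<subseteq> S \<and> card B = 2}"
      by (rule finite_subset[of _ "Pow S"]) (auto simp: finS)
    ultimately have "card ES \<le> card {B. B \<subseteq> S \<and> card B = 2}" by (rule card_mono[rotated])
    thus ?thesis using n_subsets[OF finS, of 2] S(2) by simp
  qed
  have cx: "card {e\<in>E. x \<in> e \<and> e \<inter> S \<noteq> {}} \<le> r - 2" if xW: "x \<in> W" for x
  proof -
    define T where "T = {s\<in>S. {x,s} \<in> E}"
    have xS: "x \<notin> S" using xW unfolding W_def by blast
    have TS: "T \<subseteq> S" unfolding T_def by blast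
    have finT: "finite T" using finS TS by (rule finite_subset[rotated])
    have "{e\<in>E. x \<in> e \<and> e \<inter> S \<noteq> {}} \<subseteq> (\<lambda>s. {x,s}) ` T"
    proof
      fix e assume e: "e \<in> {e\<in>E. x \<in> e \<and> e \<inter> S \<noteq> {}}"
      then obtain s where s: "s \<in> e" "s \<in> S" by blast
      hence "s \<noteq> x" using xS by blast
      have "card e = 2" using Es e by blast
      then obtain a b where ab: "e = {a,b}" "a \<noteq> b" unfolding card_2_iff by blast
      have "e = {x,s}" using ab e s \<open>s \<noteq> x\<close> by auto
      hence "s \<in> T" using e s unfolding T_def by auto
      thus "e \<in> (\<lambda>s. {x,s}) ` T" using \<open>e = {x,s}\<close> by blast
    qed
    hence "card {e\<in>E. x \<in> e \<and> e \<inter> S \<noteq> {}} \<le> card ((\<lambda>s. {x,s}) ` T)"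
      by (rule card_mono[rotated]) (simp add: finT)
    also have "\<dots> \<le> card T" by (rule card_image_le) (rule finT)
    also have "card T \<le> r - 2"
    proof (rule ccontr)
      assume "\<not> card T \<le> r - 2"
      hence "r - 1 \<le> card T" by simp
      then obtain T' where T': "T' \<subseteq> T" "card T' = r - 1" "finite T'" by (rule obtain_subset_with_card_n)
      have "insert x T' \<in> cl V E r" unfolding cl_def
      proof (intro CollectI conjI)
        show "insert x T' \<subseteq> V" using xW T' TS S(1) unfolding W_def by blast
        have "x \<notin> T'" using T' TS xS by blast
        thus "card (insert x T') = r" using T' r2 by simp
        show "clique E (insert x T')" unfolding clique_def
        proof (intro ballI impI)
          fix a b assume ab: "a \<in> insert x T'" "b \<in> insert x T'" "a \<noteq> b"
          show "{a,b} \<in> E"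
          proof (cases "a = x")
            case True hence "b \<in> T" using ab T' by auto
            thus ?thesis using True unfolding T_def by simp
          next
            case ax: False
            show ?thesis
            proof (cases "b = x")
              case True hence "a \<in> T" using ab ax T' by auto
              thus ?thesis using True unfolding T_def by (simp add: insert_commute)
            next
              case False
              hence "a \<in> S" "b \<in> S" using ab ax T' TS by auto
              thus ?thesis using S(3) ab(3) unfolding clique_def by blast
            qed
          qed
        qed
      qed
      hence "insert x T' = S" using clS by blast
      thus False using xS by blast
    qed
    finally show ?thesis .
  qed
  have cU: "card U \<le> (n - r) * (r - 2)"
  proof -
    have "card U \<le> (\<Sum>x\<in>W. card {e\<in>E. x \<in> e \<and> e \<inter> S \<noteq> {}})" unfolding U_def
      by (rule card_UN_le) (simp add: W_def finV)
    also have "\<dots> \<le> (\<Sum>x\<in>W. r - 2)" using cx by (intro sum_mono)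
    also have "\<dots> = (n - r) * (r - 2)" using cW by simp
    finally show ?thesis .
  qed
  have cEW: "card EW \<le> ex (n - r) (K_verts r) (K_edges r)"
  proof (rule ex_ge[OF r2 _ cW])
    show "finite W" unfolding W_def using finV by simp
    show "\<forall>e\<in>EW. card e = 2 \<and> e \<subseteq> W" unfolding EW_def using Es by blast
    show "cl W EW r = {}"
    proof (rule ccontr)
      assume "cl W EW r \<noteq> {}"
      then obtain C where C: "C \<subseteq> W" "card C = r" "clique EW C" unfolding cl_def by blast
      have "clique E C" using C(3) unfolding clique_def EW_def by blast
      hence "C \<in> cl V E r" using C unfolding cl_def W_def by blast
      hence "C = S" using clS by blast
      moreover have "C \<noteq> {}" using C(2) r2 by auto
      ultimately show False using C(1) unfolding W_def by blast
    qed
  qed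
  have "ES \<union> EW \<union> U \<subseteq> E" unfolding ES_def EW_def U_def by blast
  hence "finite (ES \<union> EW \<union> U)" using finE by (rule finite_subset)
  hence "card E \<le> card (ES \<union> EW \<union> U)" using EU by (rule card_mono)
  also have "\<dots> \<le> card (ES \<union> EW) + card U" by (rule card_Un_le)
  also have "\<dots> \<le> card ES + card EW + card U" using card_Un_le[of ES EW] by simp
  finally show ?thesis using cES cEW cU by (simp add: mult.commute)
qed



lemma lower:
  assumes r2: "r \<ge> 2" and rn: "r \<le> n"
  shows "\<exists>H. simple_graph {0..<n} H \<and> card (cl {0..<n} H r) = 1 \<and>
     (r choose 2) + (r - 2) * (n - r) + ex (n - r) (K_verts r) (K_edges r) \<le> card H"
proof -
  define m where "m = n - r"
  have nm: "n = m + r" using rn unfolding m_def by simp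
  define exS where "exS = {card E | E. simple_graph {0..<m} E \<and> num_sub {0..<m} E (K_verts r) (K_edges r) = 0}"
  have "card ({} :: nat set set) \<in> exS"
  proof -
    have "cl {0..<m} {} r = {}"
    proof (rule ccontr)
      assume "cl {0..<m} {} r \<noteq> {}"
      then obtain C :: "nat set" where C: "card C = r" "clique {} C" unfolding cl_def by auto
      then obtain x y where "x \<in> C" "y \<in> C" "x \<noteq> y" using two_elems r2 by metis
      thus False using C(2) unfolding clique_def by blast
    qed
    hence "num_sub {0..<m} {} (K_verts r) (K_edges r) = 0" by (simp add: num_sub_K)
    thus ?thesis unfolding exS_def simple_graph_def by blast
  qed
  moreover have "finite exS" unfolding exS_def by (rule fin_cards)
  ultimately have "Max exS \<in> exS" by (intro Max_in) auto
  moreover have "ex m (K_verts r) (K_edges r) = Max exS" unfolding ex_def exS_def by simp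
  ultimately obtain G where G: "simple_graph {0..<m} G" "num_sub {0..<m} G (K_verts r) (K_edges r) = 0"
      "card G = ex m (K_verts r) (K_edges r)" unfolding exS_def by auto
  have "card (cl {0..<m} G r) = 0" using G(2) by (simp add: num_sub_K)
  hence clG: "cl {0..<m} G r = {}" using cl_finite[of "{0..<m}" G r] by simp
  have clq: "\<forall>C. C \<subseteq> {0..<m} \<and> clique G C \<longrightarrow> card C < r"
  proof (intro allI impI)
    fix C assume C: "C \<subseteq> {0..<m} \<and> clique G C"
    show "card C < r"
    proof (rule ccontr)
      assume "\<not> card C < r"
      hence "r \<le> card C" by simp
      then obtain C' where C': "C' \<subseteq> C" "card C' = r" by (rule obtain_subset_with_card_n)
      have "clique G C'" using C C'(1) by (blast intro: clique_subset)
      hence "C' \<in> cl {0..<m} G r" using C C' unfolding cl_def by blast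
      thus False using clG by blast
    qed
  qed
  have Gs: "\<forall>e\<in>G. card e = 2 \<and> e \<subseteq> {0..<m}" using G(1) unfolding simple_graph_def by blast
  obtain col where col: "\<forall>x\<in>{0..<m}. col x < r - 1" "card G \<le> card (CM {0..<m} col)"
    using turan_col[OF _ Gs clq] by auto
  define S where "S = {m..<n}"
  define B where "B x = (\<lambda>j. m + j) ` ({0..<r-1} - {col x})" for x
  define X where "X = (\<lambda>(x,y). {x,y}) ` Sigma {0..<m} B"
  define K where "K = CM {0..<m} col"
  define H where "H = P2 S \<union> K \<union> X"
  have finS: "finite S" "card S = r" unfolding S_def nm by simp_all
  have cP2: "card (P2 S) = r choose 2" unfolding P2_def using n_subsets[OF finS(1), of 2] finS(2) by simp
  have cB: "card (B x) = r - 2" if "x < m" for x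
  proof -
    have "card (B x) = card ({0..<r-1} - {col x})" unfolding B_def by (rule card_image) (simp add: inj_on_def)
    also have "\<dots> = r - 2" using col(1) that by simp
    finally show ?thesis .
  qed
  have cX: "card X = m * (r - 2)"
  proof -
    have "card X = card (Sigma {0..<m} B)" unfolding X_def by (rule card_pairs) (auto simp: B_def)
    also have "\<dots> = (\<Sum>x\<in>{0..<m}. card (B x))" by (simp add: B_def)
    also have "\<dots> = (\<Sum>x\<in>{0..<m}. r - 2)" using cB by (intro sum.cong) auto
    finally show ?thesis by simp
  qed
  have finK: "finite K" unfolding K_def by (rule CM_finite) simp
  have finP: "finite (P2 S)" by (rule finite_subset[of _ "Pow S"]) (auto simp: P2_def finS)
  have finX: "finite X" unfolding X_def B_def by auto
  have Kl: "\<forall>e\<in>K. \<forall>x\<in>e. x < m" unfolding K_def CM_def by auto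
  have Kne: "\<forall>e\<in>K. e \<noteq> {}" unfolding K_def CM_def by auto
  have Pg: "\<forall>e\<in>P2 S. \<forall>x\<in>e. m \<le> x" unfolding P2_def S_def by auto
  have Xlg: "\<forall>e\<in>X. (\<exists>x\<in>e. x < m) \<and> (\<exists>y\<in>e. m \<le> y)" unfolding X_def B_def by auto
  have d1: "P2 S \<inter> K = {}"
  proof (rule ccontr)
    assume "P2 S \<inter> K \<noteq> {}"
    then obtain e where e: "e \<in> P2 S" "e \<in> K" by blast
    then obtain x where x: "x \<in> e" using Kne by blast
    have "m \<le> x" using Pg e(1) x by blast
    moreover have "x < m" using Kl e(2) x by blast
    ultimately show False by simp
  qed
  have d2: "(P2 S \<union> K) \<inter> X = {}"
  proof (rule ccontr)
    assume "(P2 S \<union> K) \<inter> X \<noteq> {}"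
    then obtain e where e: "e \<in> P2 S \<union> K" "e \<in> X" by blast
    then obtain x y where xy: "x \<in> e" "x < m" "y \<in> e" "m \<le> y" using Xlg by blast
    from e(1) show False
    proof (elim UnE)
      assume "e \<in> P2 S"
      hence "m \<le> x" using Pg xy(1) by blast
      thus False using xy(2) by simp
    next
      assume "e \<in> K"
      hence "y < m" using Kl xy(3) by blast
      thus False using xy(4) by simp
    qed
  qed
  have c1: "card (P2 S \<union> K) = card (P2 S) + card K" by (rule card_Un_disjoint[OF finP finK d1])
  have "finite (P2 S \<union> K)" using finP finK by simp
  hence c2: "card (P2 S \<union> K \<union> X) = card (P2 S \<union> K) + card X" using finX d2 by (rule card_Un_disjoint)
  have cH: "card H = (r choose 2) + card K + m * (r - 2)"
    unfolding H_def using c1 c2 cP2 cX by simp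
  have sH: "simple_graph {0..<n} H" unfolding simple_graph_def
  proof (intro conjI ballI)
    show "finite {0..<n}" by simp
  next
    fix e assume "e \<in> H"
    hence "card e = 2 \<and> e \<subseteq> {0..<n}"
      unfolding H_def
    proof (elim UnE)
      assume "e \<in> P2 S" thus ?thesis unfolding P2_def S_def by auto
    next
      assume "e \<in> K"
      then obtain x y where "e = {x,y}" "x < m" "y < m" "col x \<noteq> col y" unfolding K_def CM_def by auto
      moreover hence "x \<noteq> y" by auto
      ultimately show ?thesis using nm by auto
    next
      assume "e \<in> X"
      then obtain x y where "e = {x, y}" "x < m" "y \<in> B x" unfolding X_def by auto
      moreover then obtain j where "y = m + j" "j < r - 1" unfolding B_def by auto
      ultimately show ?thesis using nm by auto
    qed
    thus "card e = 2" "e \<subseteq> {0..<n}" by auto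
  qed
  have f1: "b < n \<and> b - m < r - 1 \<and> b - m \<noteq> col a" if ab: "a < m" "m \<le> b" "{a,b} \<in> H" for a b
  proof -
    have "{a,b} \<notin> P2 S" using ab(1) Pg by auto
    moreover have "{a,b} \<notin> K" using ab(2) Kl by fastforce
    ultimately have "{a,b} \<in> X" using ab(3) unfolding H_def by blast
    then obtain x y where "{a,b} = {x, y}" "x < m" "y \<in> B x" unfolding X_def by auto
    moreover then obtain j where "y = m + j" "j \<in> {0..<r-1} - {col x}" unfolding B_def by blast
    ultimately have xj: "{a,b} = {x, m+j}" "x < m" "j < r-1" "j \<noteq> col x" by auto
    hence "a = x \<and> b = m + j" using ab(1,2) by (auto simp: doubleton_eq_iff)
    thus ?thesis using xj nm by auto
  qed
  have f2: "col a \<noteq> col b" if ab: "a < m" "b < m" "{a,b} \<in> H" for a b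
  proof -
    have "{a,b} \<notin> P2 S" using ab(1) Pg by auto
    moreover have "{a,b} \<notin> X" using ab(1,2) Xlg by fastforce
    ultimately have "{a,b} \<in> K" using ab(3) unfolding H_def by blast
    then obtain x y where "{a,b} = {x,y}" "col x \<noteq> col y" unfolding K_def CM_def by blast
    thus ?thesis by (auto simp: doubleton_eq_iff)
  qed
  have "cl {0..<n} H r = {S}"
  proof
    have "clique H S" unfolding clique_def
    proof (intro ballI impI)
      fix x y assume "x \<in> S" "y \<in> S" "x \<noteq> y"
      hence "{x,y} \<in> P2 S" unfolding P2_def by auto
      thus "{x,y} \<in> H" unfolding H_def by blast
    qed
    moreover have "S \<subseteq> {0..<n}" unfolding S_def by auto
    ultimately show "{S} \<subseteq> cl {0..<n} H r" unfolding cl_def using finS by auto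
  next
    show "cl {0..<n} H r \<subseteq> {S}"
    proof
      fix C assume "C \<in> cl {0..<n} H r"
      hence C: "C \<subseteq> {0..<n}" "card C = r" "clique H C" unfolding cl_def by blast+
      show "C \<in> {S}"
      proof (cases "C \<subseteq> S")
        case True
        hence "C = S" using card_subset_eq[OF finS(1) True] C(2) finS(2) by simp
        thus ?thesis by simp
      next
        case False
        then obtain x where x0: "x \<in> C" "x \<notin> S" by blast
        hence "x < n" using C(1) by auto
        hence x: "x \<in> C" "x < m" using x0 unfolding S_def by auto
        define \<phi> where "\<phi> y = (if y < m then col y else y - m)" for y
        have img: "\<phi> ` C \<subseteq> {0..<r-1}"
        proof
          fix z assume "z \<in> \<phi> ` C"
          then obtain y where y: "y \<in> C" "z = \<phi> y" by blast
          show "z \<in> {0..<r-1}"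
          proof (cases "y < m")
            case True thus ?thesis using y col(1) unfolding \<phi>_def by simp
          next
            case False
            hence "y \<noteq> x" using x by auto
            hence xyH: "{x,y} \<in> H" using C(3)[unfolded clique_def, rule_format, OF x(1) y(1)] by blast
            have "m \<le> y" using False by simp
            hence "y - m < r - 1" using f1[OF x(2) _ xyH] by blast
            thus ?thesis using y False unfolding \<phi>_def by simp
          qed
        qed
        have inj: "inj_on \<phi> C"
        proof (rule inj_onI, rule ccontr)
          fix y z assume yz: "y \<in> C" "z \<in> C" "\<phi> y = \<phi> z" "y \<noteq> z"
          have e: "{y,z} \<in> H" using C(3)[unfolded clique_def, rule_format, OF yz(1,2) yz(4)] .
          show False
          proof (cases "y < m")
            case ym: True
            show False
            proof (cases "z < m")
              case True
              have "col y \<noteq> col z" using f2[OF ym True e] .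
              thus False using yz(3) ym True unfolding \<phi>_def by simp
            next
              case False
              have "m \<le> z" using False by simp
              hence "z - m \<noteq> col y" using f1[OF ym _ e] by blast
              thus False using yz(3) ym False unfolding \<phi>_def by simp
            qed
          next
            case ym: False
            show False
            proof (cases "z < m")
              case True
              have zy: "{z,y} \<in> H" using e by (simp add: insert_commute)
              have "m \<le> y" using ym by simp
              hence "y - m \<noteq> col z" using f1[OF True _ zy] by blast
              thus False using yz(3) ym True unfolding \<phi>_def by simp
            next
              case False
              thus False using yz(3,4) ym unfolding \<phi>_def by simp
            qed
          qed
        qed
        have "card C \<le> r - 1" using card_inj_on_le[OF inj img] by simp
        thus ?thesis using C(2) r2 by simp
      qed
    qed
  qed
  moreover have "(r choose 2) + (r - 2) * (n - r) + ex (n - r) (K_verts r) (K_edges r) \<le> card H"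
    using cH col(2) G(3) unfolding m_def K_def by (simp add: mult.commute)
  ultimately show ?thesis using sH by auto
qed

theorem theorem1p4:
  fixes r n :: nat
  assumes "r \<ge> 2" and "n \<ge> r"
  shows "exa 1 n (K_verts r) (K_edges r)
           = (r choose 2) + (r - 2) * (n - r) + ex (n - r) (K_verts r) (K_edges r)"
proof -
  define F where "F = (r choose 2) + (r - 2) * (n - r) + ex (n - r) (K_verts r) (K_edges r)"
  define A where "A = {card E | E. simple_graph {0..<n} E \<and> num_sub {0..<n} E (K_verts r) (K_edges r) = 1}"
  have finA: "finite A" unfolding A_def by (rule fin_cards)
  obtain H where H: "simple_graph {0..<n} H" "card (cl {0..<n} H r) = 1" "F \<le> card H"
    using lower[OF assms] unfolding F_def by blast
  have "num_sub {0..<n} H (K_verts r) (K_edges r) = 1" using H(2) by (simp add: num_sub_K)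
  hence HA: "card H \<in> A" unfolding A_def using H(1) by blast
  have ub: "a \<le> F" if aA: "a \<in> A" for a
  proof -
    obtain E where E: "a = card E" "simple_graph {0..<n} E" "num_sub {0..<n} E (K_verts r) (K_edges r) = 1"
      using aA unfolding A_def by blast
    have "card (cl {0..<n} E r) = 1" using E(3) by (simp add: num_sub_K)
    thus ?thesis using upper[OF assms E(2)] E(1) unfolding F_def by simp
  qed
  have "Max A \<le> F" using finA HA ub by (subst Max_le_iff) auto
  moreover have "card H \<le> Max A" using finA HA by (rule Max_ge)
  ultimately have "Max A = F" using H(3) by simp
  thus ?thesis unfolding exa_def A_def F_def .
qed

end
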